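(* Let $a,n$ be coprime positive integers and let $\pi\in S(\mathbb{Z}_n)$ be given by $\pi(x)=ax$. Then $t([\pi])=n-\sum_{d\mid n}\frac{\varphi(d)}{\mathrm{ord}_d(a)}$, the sum running over positive divisors $d$ of $n$.
   Context: $S(\mathbb{Z}_n)$ is the set of bijections $\mathbb{Z}_n\to\mathbb{Z}_n$. For $\pi\in S(\mathbb{Z}_n)$, $\mathrm{cyc}(\pi)$ is the number of cycles (including fixed points) of $\pi$, $t(\pi)=n-\mathrm{cyc}(\pi)$, $[\pi]=\{x\mapsto \pi(x+b): b\in\mathbb{Z}_n\}$ and $t([\pi])=\min_{\sigma\in[\pi]}t(\sigma)$. $\varphi$ is Euler's totient function and $\mathrm{ord}_d(a)$ is the multiplicative order of $a\bmod d$ in $\mathbb{Z}_d^\times$ (with $\mathrm{ord}_1(a)=1$). *)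

theory Defs
  imports "HOL-Number_Theory.Number_Theory"
begin

text \<open>Z_n is represented by the residues {0..<n}; a map Z_n -> Z_n by a function nat => nat
  (only its values on {0..<n} matter).\<close>

definition zn_perm :: "nat \<Rightarrow> (nat \<Rightarrow> nat) \<Rightarrow> bool" where
  "zn_perm n f \<longleftrightarrow> bij_betw f {0..<n} {0..<n}"

definition zn_cycles :: "nat \<Rightarrow> (nat \<Rightarrow> nat) \<Rightarrow> nat set set" where
  "zn_cycles n f = {{(f ^^ k) x | k. True} | x. x < n}"

definition cyc :: "nat \<Rightarrow> (nat \<Rightarrow> nat) \<Rightarrow> nat" where
  "cyc n f = card (zn_cycles n f)"

definition tperm :: "nat \<Rightarrow> (nat \<Rightarrow> nat) \<Rightarrow> nat" where
  "tperm n f = n - cyc n f"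

definition shift_class :: "nat \<Rightarrow> (nat \<Rightarrow> nat) \<Rightarrow> (nat \<Rightarrow> nat) set" where
  "shift_class n f = {(\<lambda>x. f ((x + b) mod n)) | b. b < n}"

definition tclass :: "nat \<Rightarrow> (nat \<Rightarrow> nat) \<Rightarrow> nat" where
  "tclass n f = Min (tperm n ` shift_class n f)"

end

theory Submission
  imports Defs
begin

definition orb :: "(nat \<Rightarrow> nat) \<Rightarrow> nat \<Rightarrow> nat set" where
  "orb f x = {(f ^^ k) x | k. True}"

lemma per_basic:
  assumes "0 < N" "(f ^^ N) x = x"
  defines "q \<equiv> LEAST k. 0 < k \<and> (f ^^ k) x = x"
  shows "0 < q \<and> (f ^^ q) x = x \<and> (\<forall>k. (f ^^ k) x = x \<longleftrightarrow> q dvd k) \<and> card (orb f x) = q"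
proof -
  have q1: "0 < q \<and> (f ^^ q) x = x" unfolding q_def
    by (rule LeastI[of _ N]) (use assms in auto)
  have qmin: "q \<le> k" if "0 < k" "(f ^^ k) x = x" for k
    unfolding q_def by (rule Least_le) (use that in auto)
  have mult: "(f ^^ (q * j)) x = x" for j
  proof (induction j)
    case (Suc j)
    have "(f ^^ (q * Suc j)) x = (f ^^ q) ((f ^^ (q * j)) x)"
      by (simp add: funpow_add)
    then show ?case using Suc q1 by simp
  qed simp
  have red: "(f ^^ k) x = (f ^^ (k mod q)) x" for k
  proof -
    have "(f ^^ k) x = (f ^^ (k mod q + q * (k div q))) x" by simp
    also have "\<dots> = (f ^^ (k mod q)) ((f ^^ (q * (k div q))) x)" by (simp only: funpow_add comp_apply)
    finally show ?thesis using mult by simp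
  qed
  have iff: "(f ^^ k) x = x \<longleftrightarrow> q dvd k" for k
  proof
    assume h: "(f ^^ k) x = x"
    show "q dvd k"
    proof (rule ccontr)
      assume "\<not> q dvd k"
      then have "0 < k mod q" by (simp add: dvd_eq_mod_eq_0)
      moreover have "(f ^^ (k mod q)) x = x" using h red by simp
      ultimately have "q \<le> k mod q" by (rule qmin)
      moreover have "k mod q < q" using q1 by simp
      ultimately show False by simp
    qed
  next
    assume "q dvd k" then obtain j where "k = q * j" by blast
    then show "(f ^^ k) x = x" using mult by simp
  qed
  have orbeq: "orb f x = (\<lambda>k. (f ^^ k) x) ` {..<q}"
  proof
    show "orb f x \<subseteq> (\<lambda>k. (f ^^ k) x) ` {..<q}"
    proof
      fix y assume "y \<in> orb f x"
      then obtain k where "y = (f ^^ k) x" unfolding orb_def by auto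
      then have "y = (f ^^ (k mod q)) x" using red by simp
      moreover have "k mod q \<in> {..<q}" using q1 by simp
      ultimately show "y \<in> (\<lambda>k. (f ^^ k) x) ` {..<q}" by blast
    qed
    show "(\<lambda>k. (f ^^ k) x) ` {..<q} \<subseteq> orb f x"
      unfolding orb_def by auto
  qed
  have inj: "inj_on (\<lambda>k. (f ^^ k) x) {..<q}"
  proof (rule linorder_inj_onI')
    fix i j assume ij: "i \<in> {..<q}" "j \<in> {..<q}" "i < j"
    show "(f ^^ i) x \<noteq> (f ^^ j) x"
    proof
      assume e: "(f ^^ i) x = (f ^^ j) x"
      have "(f ^^ (q - j + i)) x = (f ^^ (q - j)) ((f ^^ i) x)" by (simp only: funpow_add comp_apply)
      also have "\<dots> = (f ^^ (q - j)) ((f ^^ j) x)" using e by simp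
      also have "\<dots> = (f ^^ (q - j + j)) x" by (simp only: funpow_add comp_apply)
      also have "\<dots> = (f ^^ q) x" using ij by simp
      finally have "(f ^^ (q - j + i)) x = x" using q1 by simp
      then have "q \<le> q - j + i" by (rule qmin[rotated]) (use ij in auto)
      then show False using ij by auto
    qed
  qed
  have "card (orb f x) = q" unfolding orbeq using inj by (simp add: card_image)
  with q1 iff show ?thesis by blast
qed

lemma card_multiples:
  assumes "0 < (q::nat)" "q dvd N"
  shows "card {k\<in>{..<N}. q dvd k} = N div q"
proof -
  obtain m where N: "N = q * m" using assms by blast
  have "{k\<in>{..<N}. q dvd k} = (\<lambda>j. q * j) ` {..<m}"
  proof
    show "{k\<in>{..<N}. q dvd k} \<subseteq> (\<lambda>j. q * j) ` {..<m}"
    proof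
      fix k assume "k \<in> {k\<in>{..<N}. q dvd k}"
      then obtain j where "k = q * j" "q * j < q * m" using N by auto
      then show "k \<in> (\<lambda>j. q * j) ` {..<m}" by auto
    qed
    show "(\<lambda>j. q * j) ` {..<m} \<subseteq> {k\<in>{..<N}. q dvd k}"
      using N assms by auto
  qed
  moreover have "inj_on (\<lambda>j. q * j) {..<m}" using assms by (auto simp: inj_on_def)
  ultimately show ?thesis using N assms by (simp add: card_image)
qed

lemma orb_in:
  assumes cl: "\<forall>x<n. f x < n" and "x < n"
  shows "(f ^^ k) x < n"
  using assms by (induction k) auto

lemma orb_sub:
  assumes cl: "\<forall>x<n. f x < n" and "x < n"
  shows "orb f x \<subseteq> {0..<n}"
  using orb_in[OF assms] unfolding orb_def by auto

lemma orb_self: "x \<in> orb f x"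
  unfolding orb_def by (auto intro: exI[of _ 0])

lemma orb_sym:
  assumes "0 < N" "(f ^^ N) x = x" and y: "y \<in> orb f x"
  shows "orb f y = orb f x"
proof -
  define q where "q = (LEAST k. 0 < k \<and> (f ^^ k) x = x)"
  have P: "0 < q \<and> (f ^^ q) x = x \<and> (\<forall>k. (f ^^ k) x = x \<longleftrightarrow> q dvd k)"
    using per_basic[OF assms(1,2)] unfolding q_def by blast
  obtain k where k: "y = (f ^^ k) x" using y unfolding orb_def by auto
  have kk: "k \<le> q * k" using P by simp
  have bk: "(f ^^ (q * k - k)) y = x"
  proof -
    have "(f ^^ (q * k - k)) y = (f ^^ (q * k - k + k)) x" unfolding k by (simp only: funpow_add comp_apply)
    also have "\<dots> = (f ^^ (q * k)) x" using kk by simp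
    finally show ?thesis using P by simp
  qed
  show ?thesis
  proof
    show "orb f y \<subseteq> orb f x"
    proof
      fix z assume "z \<in> orb f y"
      then obtain j where "z = (f ^^ j) y" unfolding orb_def by auto
      then have "z = (f ^^ (j + k)) x" unfolding k by (simp only: funpow_add comp_apply)
      then show "z \<in> orb f x" unfolding orb_def by blast
    qed
    show "orb f x \<subseteq> orb f y"
    proof
      fix z assume "z \<in> orb f x"
      then obtain j where "z = (f ^^ j) x" unfolding orb_def by auto
      then have "z = (f ^^ (j + (q * k - k))) y" using bk by (simp only: funpow_add comp_apply)
      then show "z \<in> orb f y" unfolding orb_def by blast
    qed
  qed
qed

lemma cyc_orb: "cyc n f = card (orb f ` {0..<n})"
proof -
  have "zn_cycles n f = {orb f x | x. x < n}"
    unfolding zn_cycles_def orb_def by (rule refl)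
  also have "\<dots> = orb f ` {0..<n}" by (auto simp: setcompr_eq_image)
  finally have "zn_cycles n f = orb f ` {0..<n}" .
  then show ?thesis unfolding cyc_def by simp
qed

lemma cyc_le: "cyc n f \<le> n"
  unfolding cyc_orb using card_image_le[of "{0..<n}" "orb f"] by simp

lemma cyc_sum:
  assumes cl: "\<forall>x<n. f x < n" and N: "0 < N" "\<forall>x<n. (f ^^ N) x = x"
  shows "real (cyc n f) = (\<Sum>x\<in>{0..<n}. 1 / real (card (orb f x)))"
proof -
  have "(\<Sum>x\<in>{0..<n}. 1 / real (card (orb f x))) =
    (\<Sum>C\<in>orb f ` {0..<n}. \<Sum>x\<in>{x\<in>{0..<n}. orb f x = C}. 1 / real (card (orb f x)))"
    by (rule sum.image_gen) simp
  also have "\<dots> = (\<Sum>C\<in>orb f ` {0..<n}. 1)"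
  proof (rule sum.cong[OF refl])
    fix C assume "C \<in> orb f ` {0..<n}"
    then obtain x0 where x0: "x0 < n" "C = orb f x0" by auto
    have sub: "C \<subseteq> {0..<n}" using orb_sub[OF cl x0(1)] x0 by simp
    have eq: "{x\<in>{0..<n}. orb f x = C} = C"
    proof
      show "{x\<in>{0..<n}. orb f x = C} \<subseteq> C" using orb_self by blast
      show "C \<subseteq> {x\<in>{0..<n}. orb f x = C}"
      proof
        fix x assume xC: "x \<in> C"
        then have "x < n" using sub by auto
        moreover have "orb f x = C" using orb_sym[OF N(1), of f x0 x] N(2) x0 xC by simp
        ultimately show "x \<in> {x\<in>{0..<n}. orb f x = C}" by simp
      qed
    qed
    have oc: "orb f x = C" if "x \<in> C" for x using eq that by blast
    have fin: "finite C" using sub finite_subset by blast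
    have ne: "C \<noteq> {}" using orb_self x0 by blast
    have "(\<Sum>x\<in>{x\<in>{0..<n}. orb f x = C}. 1 / real (card (orb f x))) = (\<Sum>x\<in>C. 1 / real (card C))"
      by (rule sum.cong[OF eq]) (simp add: oc)
    also have "\<dots> = 1" using fin ne by simp
    finally show "(\<Sum>x\<in>{x\<in>{0..<n}. orb f x = C}. 1 / real (card (orb f x))) = 1" .
  qed
  also have "\<dots> = real (cyc n f)" unfolding cyc_orb by simp
  finally show ?thesis by simp
qed

lemma burnside:
  assumes cl: "\<forall>x<n. f x < n" and N: "0 < N" "\<forall>x<n. (f ^^ N) x = x"
  shows "real (cyc n f) * real N = (\<Sum>k\<in>{..<N}. real (card {x\<in>{0..<n}. (f ^^ k) x = x}))"
proof -
  have c: "card {k\<in>{..<N}. (f ^^ k) x = x} = N div card (orb f x)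
     \<and> card (orb f x) dvd N \<and> 0 < card (orb f x)" if "x < n" for x
  proof -
    define q where "q = (LEAST k. 0 < k \<and> (f ^^ k) x = x)"
    have P: "0 < q \<and> (f ^^ q) x = x \<and> (\<forall>k. (f ^^ k) x = x \<longleftrightarrow> q dvd k) \<and> card (orb f x) = q"
      using per_basic[OF N(1)] N(2) that unfolding q_def by blast
    then have "q dvd N" using N(2) that by blast
    then show ?thesis using P card_multiples[of q N] by simp
  qed
  have "(\<Sum>k\<in>{..<N}. card {x\<in>{0..<n}. (f ^^ k) x = x}) =
        (\<Sum>k\<in>{..<N}. \<Sum>x\<in>{x\<in>{0..<n}. (f ^^ k) x = x}. (1::nat))" by simp
  also have "\<dots> = (\<Sum>x\<in>{0..<n}. \<Sum>k\<in>{k\<in>{..<N}. (f ^^ k) x = x}. (1::nat))"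
    by (rule sum.swap_restrict) auto
  also have "\<dots> = (\<Sum>x\<in>{0..<n}. card {k\<in>{..<N}. (f ^^ k) x = x})" by simp
  finally have e0: "(\<Sum>k\<in>{..<N}. card {x\<in>{0..<n}. (f ^^ k) x = x}) =
      (\<Sum>x\<in>{0..<n}. card {k\<in>{..<N}. (f ^^ k) x = x})" .
  have "(\<Sum>k\<in>{..<N}. real (card {x\<in>{0..<n}. (f ^^ k) x = x})) =
      real (\<Sum>k\<in>{..<N}. card {x\<in>{0..<n}. (f ^^ k) x = x})" by (simp only: of_nat_sum)
  also have "\<dots> = real (\<Sum>x\<in>{0..<n}. card {k\<in>{..<N}. (f ^^ k) x = x})" by (simp only: e0)
  also have "\<dots> = (\<Sum>x\<in>{0..<n}. real (card {k\<in>{..<N}. (f ^^ k) x = x}))" by (simp only: of_nat_sum)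
  also have "\<dots> = (\<Sum>x\<in>{0..<n}. real N * (1 / real (card (orb f x))))"
  proof (rule sum.cong[OF refl])
    fix x assume "x \<in> {0..<n}"
    then have cx: "card {k\<in>{..<N}. (f ^^ k) x = x} = N div card (orb f x)"
      "card (orb f x) dvd N" "0 < card (orb f x)" using c by auto
    then show "real (card {k\<in>{..<N}. (f ^^ k) x = x}) = real N * (1 / real (card (orb f x)))"
      by (simp add: real_of_nat_div)
  qed
  also have "\<dots> = real N * real (cyc n f)"
    using cyc_sum[OF cl N] by (simp add: sum_distrib_left)
  finally show ?thesis by simp
qed



lemma fb_iter:
  fixes a n b :: nat
  shows "\<exists>c. \<forall>x. [((\<lambda>x. (a * ((x + b) mod n)) mod n) ^^ k) x = a ^ k * x + c] (mod n)"
proof (induction k)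
  case 0
  show ?case by (rule exI[of _ 0]) simp
next
  case (Suc k)
  then obtain c where c: "\<forall>x. [((\<lambda>x. (a * ((x + b) mod n)) mod n) ^^ k) x = a ^ k * x + c] (mod n)" by blast
  show ?case
  proof (rule exI[of _ "a * (c + b)"], rule allI)
    fix x
    define y where "y = ((\<lambda>x. (a * ((x + b) mod n)) mod n) ^^ k) x"
    have "((\<lambda>x. (a * ((x + b) mod n)) mod n) ^^ Suc k) x = (a * ((y + b) mod n)) mod n"
      by (simp add: y_def)
    also have "[\<dots> = a * (y + b)] (mod n)"
      by (simp add: cong_def mod_mult_right_eq)
    also have "[a * (y + b) = a * ((a ^ k * x + c) + b)] (mod n)"
      using c unfolding y_def by (intro cong_mult cong_add cong_refl) auto
    also have "a * ((a ^ k * x + c) + b) = a ^ Suc k * x + a * (c + b)"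
      by (simp add: algebra_simps)
    finally show "[((\<lambda>x. (a * ((x + b) mod n)) mod n) ^^ Suc k) x = a ^ Suc k * x + a * (c + b)] (mod n)" .
  qed
qed

lemma f0_iter:
  fixes a n :: nat
  shows "[((\<lambda>x. (a * ((x + 0) mod n)) mod n) ^^ k) x = a ^ k * x] (mod n)"
proof (induction k)
  case 0 show ?case by simp
next
  case (Suc k)
  define y where "y = ((\<lambda>x. (a * ((x + 0) mod n)) mod n) ^^ k) x"
  have "((\<lambda>x. (a * ((x + 0) mod n)) mod n) ^^ Suc k) x = (a * (y mod n)) mod n"
    by (simp add: y_def)
  also have "[\<dots> = a * y] (mod n)"
    by (simp add: cong_def mod_mult_right_eq)
  also have "[a * y = a * (a ^ k * x)] (mod n)"
    using Suc unfolding y_def by (intro cong_mult cong_refl) auto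
  also have "a * (a ^ k * x) = a ^ Suc k * x" by simp
  finally show ?case .
qed

lemma fb_period:
  fixes a n b :: nat
  assumes "0 < n" "coprime a n" "x < n"
  shows "((\<lambda>x. (a * ((x + b) mod n)) mod n) ^^ (ord n a * n)) x = x"
proof -
  define f where "f = (\<lambda>x. (a * ((x + b) mod n)) mod n)"
  define m where "m = ord n a"
  obtain c where c: "\<forall>x. [(f ^^ m) x = a ^ m * x + c] (mod n)"
    using fb_iter[where a=a and b=b and n=n and k=m] unfolding f_def by blast
  have am: "[a ^ m = 1] (mod n)" unfolding m_def using ord_works by blast
  have g: "[(f ^^ m) x = x + c] (mod n)" for x
  proof -
    have "[(f ^^ m) x = a ^ m * x + c] (mod n)" using c by blast
    also have "[a ^ m * x + c = 1 * x + c] (mod n)" using am by (intro cong_add cong_mult cong_refl)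
    finally show ?thesis by simp
  qed
  have gj: "[((f ^^ m) ^^ j) x = x + j * c] (mod n)" for j
  proof (induction j)
    case 0 show ?case by simp
  next
    case (Suc j)
    have "((f ^^ m) ^^ Suc j) x = (f ^^ m) (((f ^^ m) ^^ j) x)" by simp
    also have "[\<dots> = ((f ^^ m) ^^ j) x + c] (mod n)" by (rule g)
    also have "[((f ^^ m) ^^ j) x + c = (x + j * c) + c] (mod n)" using Suc by (intro cong_add cong_refl)
    also have "(x + j * c) + c = x + Suc j * c" by simp
    finally show ?case .
  qed
  have "[((f ^^ m) ^^ n) x = x + n * c] (mod n)" by (rule gj)
  also have "[x + n * c = x + 0] (mod n)" by (intro cong_add cong_refl) (simp add: cong_def)
  finally have "[(f ^^ (m * n)) x = x] (mod n)" by (simp add: funpow_mult)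
  moreover have "(f ^^ (m * n)) x < n"
    by (rule orb_in) (use assms in \<open>auto simp: f_def\<close>)
  ultimately show ?thesis unfolding f_def m_def using assms cong_less_modulus_unique_nat by blast
qed

lemma fix_compare:
  fixes a n b :: nat
  assumes "0 < n"
  shows "card {x\<in>{0..<n}. ((\<lambda>x. (a * ((x + b) mod n)) mod n) ^^ k) x = x}
       \<le> card {x\<in>{0..<n}. ((\<lambda>x. (a * ((x + 0) mod n)) mod n) ^^ k) x = x}"
  (is "card ?A \<le> card ?B")
proof (cases "?A = {}")
  case True then show ?thesis by (simp only: True card.empty zero_le)
next
  case False
  define f where "f = (\<lambda>x. (a * ((x + b) mod n)) mod n)"
  define f0 where "f0 = (\<lambda>x. (a * ((x + 0) mod n)) mod n)"
  obtain c where c: "\<forall>x. [(f ^^ k) x = a ^ k * x + c] (mod n)"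
    using fb_iter[where a=a and b=b and n=n and k=k] unfolding f_def by blast
  from False obtain x0 where x0: "x0 < n" "(f ^^ k) x0 = x0" unfolding f_def by auto
  define h where "h = (\<lambda>x. (x + (n - x0)) mod n)"
  have hA: "h x \<in> ?B" if "x \<in> ?A" for x
  proof -
    have x: "x < n" "(f ^^ k) x = x" using that unfolding f_def by auto
    define y where "y = h x"
    have yn: "y < n" unfolding y_def h_def using assms by simp
    have yx: "[y + x0 = x] (mod n)"
    proof -
      have "[y + x0 = (x + (n - x0)) + x0] (mod n)" unfolding y_def h_def
        by (intro cong_add cong_refl) (simp add: cong_def)
      also have "(x + (n - x0)) + x0 = x + n" using x0 by simp
      also have "[x + n = x + 0] (mod n)" by (intro cong_add cong_refl) (simp add: cong_def)
      finally show ?thesis by simp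
    qed
    have cx: "[x = a ^ k * x + c] (mod n)" using c x by metis
    have cx0: "[x0 = a ^ k * x0 + c] (mod n)" using c x0 by metis
    have "[a ^ k * y + (a ^ k * x0 + c) = a ^ k * (y + x0) + c] (mod n)"
      by (simp add: algebra_simps)
    also have "[a ^ k * (y + x0) + c = a ^ k * x + c] (mod n)"
      using yx by (intro cong_add cong_mult cong_refl)
    also have "[a ^ k * x + c = x] (mod n)" using cx by (rule cong_sym)
    also have "[x = y + x0] (mod n)" using yx by (rule cong_sym)
    also have "[y + x0 = y + (a ^ k * x0 + c)] (mod n)" using cx0 by (intro cong_add cong_refl)
    finally have "[a ^ k * y = y] (mod n)" by (simp only: cong_add_rcancel_nat)
    then have "[(f0 ^^ k) y = y] (mod n)" using f0_iter[where a=a and n=n and k=k and x=y] unfolding f0_def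
      using cong_trans by blast
    moreover have "(f0 ^^ k) y < n" by (rule orb_in) (use assms yn in \<open>auto simp: f0_def\<close>)
    ultimately have "(f0 ^^ k) y = y" using yn cong_less_modulus_unique_nat by blast
    then show ?thesis using yn unfolding y_def f0_def by simp
  qed
  have inj: "inj_on h ?A"
  proof
    fix x x' assume xx: "x \<in> ?A" "x' \<in> ?A" "h x = h x'"
    then have "[x + (n - x0) = x' + (n - x0)] (mod n)" unfolding h_def cong_def by simp
    then have "[x = x'] (mod n)" by (simp add: cong_add_rcancel_nat)
    then show "x = x'" using xx cong_less_modulus_unique_nat by auto
  qed
  show ?thesis by (rule card_inj_on_le[OF inj]) (use hA in auto)
qed

lemma cong_mult_gcd:
  fixes u v x n :: nat
  assumes "0 < n"
  shows "[u * x = v * x] (mod n) \<longleftrightarrow> [u = v] (mod n div gcd x n)"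
proof -
  define g where "g = gcd x n"
  have g0: "0 < g" unfolding g_def using assms by simp
  define x' where "x' = x div g"
  define n' where "n' = n div g"
  have x: "x = g * x'" unfolding x'_def g_def by simp
  have n: "n = g * n'" unfolding n'_def g_def by simp
  have cop: "coprime x' n'" unfolding x'_def n'_def g_def using div_gcd_coprime assms by blast
  have "[u * x = v * x] (mod n) \<longleftrightarrow> (g * (u * x')) mod (g * n') = (g * (v * x')) mod (g * n')"
    unfolding cong_def x n by (simp add: ac_simps)
  also have "\<dots> \<longleftrightarrow> [u * x' = v * x'] (mod n')"
    unfolding mod_mult_mult1 cong_def using g0 by simp
  also have "\<dots> \<longleftrightarrow> [u = v] (mod n')" using cop by (rule cong_mult_rcancel_nat)
  finally show ?thesis unfolding n'_def g_def .
qed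

lemma lin_orb_card:
  fixes a n :: nat
  assumes "0 < n" "coprime a n" "x < n"
  shows "card (orb (\<lambda>x. (a * ((x + 0) mod n)) mod n) x) = ord (n div gcd x n) a"
proof -
  define f0 where "f0 = (\<lambda>x. (a * ((x + 0) mod n)) mod n)"
  define N where "N = ord n a * n"
  have N0: "0 < N" unfolding N_def using assms by (simp add: coprime_commute)
  have NN: "(f0 ^^ N) x = x" unfolding N_def f0_def by (rule fb_period[OF assms])
  define q where "q = (LEAST k. 0 < k \<and> (f0 ^^ k) x = x)"
  have P: "(\<forall>k. (f0 ^^ k) x = x \<longleftrightarrow> q dvd k) \<and> card (orb f0 x) = q"
    using per_basic[OF N0 NN] unfolding q_def by blast
  have fx: "(f0 ^^ k) x = x \<longleftrightarrow> ord (n div gcd x n) a dvd k" for k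
  proof -
    have lt: "(f0 ^^ k) x < n" by (rule orb_in) (use assms in \<open>auto simp: f0_def\<close>)
    have c: "[(f0 ^^ k) x = a ^ k * x] (mod n)" unfolding f0_def by (rule f0_iter)
    have "(f0 ^^ k) x = x \<longleftrightarrow> [a ^ k * x = 1 * x] (mod n)"
    proof
      assume "(f0 ^^ k) x = x" then show "[a ^ k * x = 1 * x] (mod n)"
        using c by (simp add: cong_sym)
    next
      assume "[a ^ k * x = 1 * x] (mod n)"
      then have "[(f0 ^^ k) x = x] (mod n)" using c cong_trans by fastforce
      then show "(f0 ^^ k) x = x" using lt assms cong_less_modulus_unique_nat by blast
    qed
    also have "\<dots> \<longleftrightarrow> [a ^ k = 1] (mod n div gcd x n)" by (rule cong_mult_gcd[OF assms(1)])
    also have "\<dots> \<longleftrightarrow> ord (n div gcd x n) a dvd k" by (rule ord_divides)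
    finally show ?thesis .
  qed
  have "q = ord (n div gcd x n) a"
    using P fx by (meson dvd_antisym dvd_refl)
  then show ?thesis using P unfolding f0_def by simp
qed


lemma lin_sum:
  fixes a n :: nat
  assumes "0 < n"
  shows "(\<Sum>x\<in>{0..<n}. 1 / real (ord (n div gcd x n) a)) =
         (\<Sum>d\<in>{d. d dvd n}. real (totient d) / real (ord d a))"
proof -
  define F where "F e = 1 / real (ord (n div e) a)" for e
  define A where "A e = {k\<in>{0<..n}. gcd k n = e}" for e
  have "(\<Sum>x\<in>{0..<n}. 1 / real (ord (n div gcd x n) a)) = (\<Sum>x\<in>{0..<n}. F (gcd x n))"
    by (simp add: F_def)
  also have "\<dots> = (\<Sum>x\<in>{1..n}. F (gcd x n))"
  proof -
    have e1: "{0..<n} = insert 0 {1..<n}" "{1..n} = insert n {1..<n}" using assms by auto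
    show ?thesis unfolding e1 by (simp add: sum.insert)
  qed
  also have "{1..n} = (\<Union>e\<in>{e. e dvd n}. A e)" by safe (auto simp: A_def)
  also have "(\<Sum>x\<in>(\<Union>e\<in>{e. e dvd n}. A e). F (gcd x n)) = (\<Sum>e\<in>{e. e dvd n}. \<Sum>x\<in>A e. F (gcd x n))"
    using assms by (intro sum.UNION_disjoint) (auto simp: A_def)
  also have "\<dots> = (\<Sum>e\<in>{e. e dvd n}. real (totient (n div e)) * F e)"
  proof (rule sum.cong[OF refl])
    fix e assume e: "e \<in> {e. e dvd n}"
    have "(\<Sum>x\<in>A e. F (gcd x n)) = (\<Sum>x\<in>A e. F e)" by (rule sum.cong) (auto simp: A_def)
    also have "\<dots> = real (card (A e)) * F e" by simp
    also have "card (A e) = totient (n div e)" unfolding A_def using assms e card_gcd_eq_totient[of n e] by blast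
    finally show "(\<Sum>x\<in>A e. F (gcd x n)) = real (totient (n div e)) * F e" .
  qed
  also have "\<dots> = (\<Sum>d\<in>{d. d dvd n}. real (totient d) / real (ord d a))"
    unfolding F_def using assms
    by (intro sum.reindex_bij_witness[of _ "(div) n" "(div) n"]) (auto elim!: dvdE)
  finally show ?thesis .
qed


theorem proposition3p3:
  fixes a n :: nat
  assumes "0 < a" and "0 < n" and "coprime a n"
  shows "zn_perm n (\<lambda>x. (a * x) mod n) \<and>
         real (tclass n (\<lambda>x. (a * x) mod n)) =
           real n - (\<Sum>d\<in>{d. d dvd n}. real (totient d) / real (ord d a))"
proof
  have inj: "inj_on (\<lambda>x. (a * x) mod n) {0..<n}"
  proof
    fix x y assume xy: "x \<in> {0..<n}" "y \<in> {0..<n}" "(a * x) mod n = (a * y) mod n"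
    then have "[a * x = a * y] (mod n)" unfolding cong_def using xy(3) by simp
    then have "[x = y] (mod n)" using assms(3) by (simp add: cong_mult_lcancel_nat)
    then show "x = y" using xy cong_less_modulus_unique_nat by auto
  qed
  have "(\<lambda>x. (a * x) mod n) ` {0..<n} = {0..<n}"
    by (rule endo_inj_surj[OF _ _ inj]) (use assms in auto)
  then show "zn_perm n (\<lambda>x. (a * x) mod n)" unfolding zn_perm_def bij_betw_def using inj by blast
next
  define fb where "fb b = (\<lambda>x. (a * ((x + b) mod n)) mod n)" for b
  define N where "N = ord n a * n"
  have N0: "0 < N" unfolding N_def using assms by (simp add: coprime_commute)
  have cl: "\<forall>x<n. fb b x < n" for b unfolding fb_def using assms by simp
  have per: "\<forall>x<n. (fb b ^^ N) x = x" for b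
    unfolding fb_def N_def using fb_period assms by blast
  have le: "cyc n (fb b) \<le> cyc n (fb 0)" for b
  proof -
    have "real (cyc n (fb b)) * real N = (\<Sum>k\<in>{..<N}. real (card {x\<in>{0..<n}. (fb b ^^ k) x = x}))"
      by (rule burnside[OF cl N0 per])
    also have "\<dots> \<le> (\<Sum>k\<in>{..<N}. real (card {x\<in>{0..<n}. (fb 0 ^^ k) x = x}))"
      by (intro sum_mono) (use fix_compare[OF assms(2)] in \<open>simp add: fb_def\<close>)
    also have "\<dots> = real (cyc n (fb 0)) * real N"
      by (rule burnside[OF cl N0 per, symmetric])
    finally have "real (cyc n (fb b)) \<le> real (cyc n (fb 0))" using N0 by simp
    then show ?thesis by simp
  qed
  have sc: "shift_class n (\<lambda>x. (a * x) mod n) = fb ` {..<n}"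
    unfolding shift_class_def fb_def by auto
  have tc: "tclass n (\<lambda>x. (a * x) mod n) = n - cyc n (fb 0)"
    unfolding tclass_def sc
  proof (rule Min_eqI)
    show "finite (tperm n ` fb ` {..<n})" by simp
    show "\<And>y. y \<in> tperm n ` fb ` {..<n} \<Longrightarrow> n - cyc n (fb 0) \<le> y"
      unfolding tperm_def using le by (auto intro: diff_le_mono2)
    show "n - cyc n (fb 0) \<in> tperm n ` fb ` {..<n}"
      unfolding tperm_def using assms(2) by auto
  qed
  have "real (cyc n (fb 0)) = (\<Sum>x\<in>{0..<n}. 1 / real (card (orb (fb 0) x)))"
    by (rule cyc_sum[OF cl N0 per])
  also have "\<dots> = (\<Sum>x\<in>{0..<n}. 1 / real (ord (n div gcd x n) a))"
    by (rule sum.cong[OF refl]) (use lin_orb_card assms in \<open>auto simp: fb_def\<close>)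
  also have "\<dots> = (\<Sum>d\<in>{d. d dvd n}. real (totient d) / real (ord d a))"
    by (rule lin_sum[OF assms(2)])
  finally have cf: "real (cyc n (fb 0)) = (\<Sum>d\<in>{d. d dvd n}. real (totient d) / real (ord d a))" .
  show "real (tclass n (\<lambda>x. (a * x) mod n)) =
           real n - (\<Sum>d\<in>{d. d dvd n}. real (totient d) / real (ord d a))"
    unfolding tc using cyc_le[of n "fb 0"] cf by (simp add: of_nat_diff)
qed

end
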